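(* In the CloseTop-1 data structure with $m$ Gaussian vectors, the probability that a given point $x\in\mathbb{S}^{d-1}$ is stored is at least $1-\frac{1}{m^{\Theta(1)}}$.
   Context: CloseTop-1 construction on $\mathcal{S}\subseteq\mathbb{S}^{d-1}$: sample $a_1,\dots,a_m$ i.i.d. from $\mathcal{N}(0,1)^d$; each point $x\in\mathcal{S}$ is stored in bucket $i$, where $i$ is the smallest index in $[m]$ such that $\sqrt{2\log m}-\frac32\frac{\log\log m}{\sqrt{2\log m}}\le\langle a_i,x\rangle\le\sqrt{2\log m}$; if no such index exists, $x$ is not stored. Asymptotics are as $m\to\infty$. *)

theory Defs
  imports "HOL-Probability.Probability"
begin

definition std_gauss :: "real measure" where
  "std_gauss = density lborel std_normal_density"

text \<open>Joint law of the m i.i.d. vectors a_0,...,a_{m-1} drawn from N(0,1)^d: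
  a point a of the space gives the j-th coordinate of the i-th vector as a i j.\<close>
definition closetop_gaussians :: "nat \<Rightarrow> nat \<Rightarrow> (nat \<Rightarrow> nat \<Rightarrow> real) measure" where
  "closetop_gaussians m d = PiM {..<m} (\<lambda>i. PiM {..<d} (\<lambda>j. std_gauss))"

definition inner_d :: "nat \<Rightarrow> (nat \<Rightarrow> real) \<Rightarrow> (nat \<Rightarrow> real) \<Rightarrow> real" where
  "inner_d d u v = (\<Sum>j<d. u j * v j)"

text \<open>Thresholds of CloseTop-1 (log is the natural logarithm).\<close>
definition closetop_upper :: "nat \<Rightarrow> real" where
  "closetop_upper m = sqrt (2 * ln (real m))"

definition closetop_lower :: "nat \<Rightarrow> real" where
  "closetop_lower m = sqrt (2 * ln (real m)) - 3 / 2 * ln (ln (real m)) / sqrt (2 * ln (real m))"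

definition closetop_good :: "nat \<Rightarrow> nat \<Rightarrow> (nat \<Rightarrow> real) \<Rightarrow> (nat \<Rightarrow> nat \<Rightarrow> real) \<Rightarrow> nat \<Rightarrow> bool" where
  "closetop_good m d x a i \<longleftrightarrow>
     closetop_lower m \<le> inner_d d (a i) x \<and> inner_d d (a i) x \<le> closetop_upper m"

definition closetop_bucket :: "nat \<Rightarrow> nat \<Rightarrow> (nat \<Rightarrow> real) \<Rightarrow> (nat \<Rightarrow> nat \<Rightarrow> real) \<Rightarrow> nat option" where
  "closetop_bucket m d x a =
     (if \<exists>i<m. closetop_good m d x a i then Some (LEAST i. i < m \<and> closetop_good m d x a i) else None)"

definition closetop_stored :: "nat \<Rightarrow> nat \<Rightarrow> (nat \<Rightarrow> real) \<Rightarrow> (nat \<Rightarrow> nat \<Rightarrow> real) \<Rightarrow> bool" where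
  "closetop_stored m d x a \<longleftrightarrow> closetop_bucket m d x a \<noteq> None"

end

theory Submission imports Defs "HOL-Real_Asymp.Real_Asymp" begin

lemma prob_space_std_gauss: "prob_space std_gauss"
  unfolding std_gauss_def by (rule prob_space_normal_density) simp

lemma sets_std_gauss[simp, measurable_cong]: "sets std_gauss = sets borel"
  unfolding std_gauss_def by simp

lemma space_std_gauss[simp]: "space std_gauss = UNIV"
  unfolding std_gauss_def by simp

lemma inner_distributed:
  assumes x: "(\<Sum>j<d. (x j)\<^sup>2) = 1"
  shows "distributed (PiM {..<d} (\<lambda>_. std_gauss)) lborel (\<lambda>v. inner_d d v x) std_normal_density"
proof -
  have Pp: "product_prob_space (\<lambda>_. std_gauss)"
    by (simp add: product_prob_space_def product_sigma_finite_def prob_space_std_gauss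
        prob_space_imp_sigma_finite product_prob_space_axioms_def)
  let ?M = "PiM {..<d} (\<lambda>_. std_gauss)"
  interpret prob_space ?M by (rule prob_space_PiM) (rule prob_space_std_gauss)
  define J where "J = {j\<in>{..<d}. x j \<noteq> 0}"
  have J: "finite J" "J \<subseteq> {..<d}" unfolding J_def by auto
  have "J \<noteq> {}"
  proof
    assume "J = {}"
    then have "\<And>j. j < d \<Longrightarrow> x j = 0" unfolding J_def by auto
    then have "(\<Sum>j<d. (x j)\<^sup>2) = 0" by simp
    with x show False by simp
  qed
  have rv: "random_variable std_gauss (\<lambda>v. v j)" if "j \<in> J" for j
  proof -
    have "(\<lambda>v. v j) \<in> measurable ?M std_gauss"
      by (rule measurable_component_singleton) (use J that in auto)
    then show ?thesis .
  qed
  have comp: "distr ?M std_gauss (\<lambda>v. v j) = std_gauss" if "j \<in> J" for j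
    using J that by (intro product_prob_space.PiM_component[OF Pp]) auto
  have "indep_vars (\<lambda>_. std_gauss) (\<lambda>j v. v j) J"
  proof (subst indep_vars_iff_distr_eq_PiM'[OF \<open>J \<noteq> {}\<close> rv])
    have "distr ?M (PiM J (\<lambda>_. std_gauss)) (\<lambda>v. \<lambda>i\<in>J. v i) = PiM J (\<lambda>_. std_gauss)"
      using product_prob_space.distr_PiM_restrict_finite[OF Pp J] by (simp add: restrict_def)
    also have "\<dots> = PiM J (\<lambda>j. distr ?M std_gauss (\<lambda>v. v j))"
      by (intro PiM_cong refl) (simp add: comp)
    finally show "distr ?M (PiM J (\<lambda>_. std_gauss)) (\<lambda>v. \<lambda>i\<in>J. v i) = PiM J (\<lambda>j. distr ?M std_gauss (\<lambda>v. v j))" .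
  qed auto
  note indep0 = this
  have mx: "(\<lambda>r. x j * r) \<in> measurable std_gauss borel" for j
    by (subst measurable_cong_sets[OF sets_std_gauss refl]) simp
  have "indep_vars (\<lambda>_. borel) (\<lambda>j v. (\<lambda>r. x j * r) (v j)) J"
    by (rule indep_vars_compose2[OF indep0 mx])
  then have ind: "indep_vars (\<lambda>_. borel) (\<lambda>j v. x j * v j) J" by simp
  have dj: "distributed ?M lborel (\<lambda>v. v j) std_normal_density" if "j \<in> J" for j
  proof -
    have "distr ?M lborel (\<lambda>v. v j) = distr ?M std_gauss (\<lambda>v. v j)"
      by (intro distr_cong) auto
    also have "\<dots> = density lborel std_normal_density" using comp[OF that] by (simp add: std_gauss_def)
    finally have e: "distr ?M lborel (\<lambda>v. v j) = density lborel std_normal_density" .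
    have "(\<lambda>v. v j) \<in> borel_measurable ?M"
      using rv[OF that] by (subst measurable_cong_sets[OF refl sets_std_gauss[symmetric]])
    then show ?thesis unfolding distributed_def using e by simp
  qed
  have dj2: "distributed ?M lborel (\<lambda>v. x j * v j) (normal_density 0 \<bar>x j\<bar>)" if "j \<in> J" for j
    using normal_density_affine[OF dj[OF that], where \<alpha>="x j" and \<beta>=0] that by (simp add: J_def)
  have "distributed ?M lborel (\<lambda>v. \<Sum>j\<in>J. x j * v j) (normal_density (\<Sum>j\<in>J. 0) (sqrt (\<Sum>j\<in>J. \<bar>x j\<bar>\<^sup>2)))"
    by (rule sum_indep_normal[OF J(1) \<open>J \<noteq> {}\<close> ind]) (auto simp: J_def dj2)
  moreover have "(\<Sum>j\<in>J. \<bar>x j\<bar>\<^sup>2) = 1"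
  proof -
    have "(\<Sum>j\<in>J. \<bar>x j\<bar>\<^sup>2) = (\<Sum>j<d. (x j)\<^sup>2)"
      unfolding power2_abs by (rule sum.mono_neutral_left) (auto simp: J_def)
    with x show ?thesis by simp
  qed
  moreover have "(\<lambda>v. inner_d d v x) = (\<lambda>v. \<Sum>j\<in>J. x j * v j)"
  proof
    fix v show "inner_d d v x = (\<Sum>j\<in>J. x j * v j)"
      unfolding inner_d_def by (rule sum.mono_neutral_cong_right) (auto simp: J_def)
  qed
  ultimately show ?thesis by simp
qed


lemma stored_prob:
  assumes x: "(\<Sum>j<d. (x j)\<^sup>2) = 1"
  shows "measure (closetop_gaussians m d) {a \<in> space (closetop_gaussians m d). closetop_stored m d x a}
     = 1 - (1 - measure std_gauss {closetop_lower m..closetop_upper m}) ^ m"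
proof -
  let ?N = "PiM {..<d} (\<lambda>_. std_gauss)"
  let ?L = "closetop_lower m" and ?U = "closetop_upper m"
  define f where "f = (\<lambda>v. inner_d d v x)"
  have D: "distributed ?N lborel f std_normal_density"
    unfolding f_def by (rule inner_distributed[OF x])
  have fm: "f \<in> borel_measurable ?N" using D by (simp add: distributed_def)
  have dN: "distr ?N lborel f = std_gauss" using D by (simp add: distributed_def std_gauss_def)
  have pN: "prob_space ?N" by (rule prob_space_PiM) (rule prob_space_std_gauss)
  define A where "A = {v \<in> space ?N. ?L \<le> f v \<and> f v \<le> ?U}"
  have A_eq: "A = f -` {?L..?U} \<inter> space ?N" unfolding A_def by auto
  have A_sets: "A \<in> sets ?N" unfolding A_eq using fm by measurable
  have pA: "measure ?N A = measure std_gauss {?L..?U}"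
  proof -
    have "measure (distr ?N lborel f) {?L..?U} = measure ?N (f -` {?L..?U} \<inter> space ?N)"
      by (rule measure_distr) (use fm in simp_all)
    then show ?thesis using dN A_eq by simp
  qed
  define B where "B = space ?N - A"
  have B_sets: "B \<in> sets ?N" unfolding B_def using A_sets by auto
  have pB: "measure ?N B = 1 - measure std_gauss {?L..?U}"
    unfolding B_def using prob_space.prob_compl[OF pN A_sets] pA by simp
  interpret Q: finite_product_prob_space "\<lambda>_. ?N" "{..<m}"
    by (simp add: finite_product_prob_space_def finite_product_sigma_finite_def product_prob_space_def
        product_sigma_finite_def prob_space_imp_sigma_finite pN product_prob_space_axioms_def
        finite_product_sigma_finite_axioms_def)
  have Om: "closetop_gaussians m d = PiM {..<m} (\<lambda>_. ?N)" unfolding closetop_gaussians_def ..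
  have PB: "Pi\<^sub>E {..<m} (\<lambda>_. B) \<in> sets (PiM {..<m} (\<lambda>_. ?N))"
    using B_sets by (intro sets_PiM_I_finite) auto
  have set_eq: "{a \<in> space (closetop_gaussians m d). closetop_stored m d x a}
      = space (PiM {..<m} (\<lambda>_. ?N)) - Pi\<^sub>E {..<m} (\<lambda>_. B)"
  proof -
    have "closetop_stored m d x a \<longleftrightarrow> (\<exists>i<m. a i \<in> A)" if "a \<in> space (PiM {..<m} (\<lambda>_. ?N))" for a
    proof -
      have "a i \<in> space ?N" if "i < m" for i using \<open>a \<in> _\<close> that by (auto simp: space_PiM PiE_iff)
      then show ?thesis
        unfolding closetop_stored_def closetop_bucket_def closetop_good_def A_def f_def by auto
    qed
    moreover have "a \<in> Pi\<^sub>E {..<m} (\<lambda>_. B) \<longleftrightarrow> \<not> (\<exists>i<m. a i \<in> A)" if "a \<in> space (PiM {..<m} (\<lambda>_. ?N))" for a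
      using that by (auto simp: space_PiM PiE_iff B_def)
    ultimately show ?thesis unfolding Om by blast
  qed
  have "measure (PiM {..<m} (\<lambda>_. ?N)) (Pi\<^sub>E {..<m} (\<lambda>_. B)) = (\<Prod>i<m. measure ?N B)"
    using Q.prob_times[of "\<lambda>_. B"] B_sets by simp
  then show ?thesis
    unfolding set_eq by (simp only: Om Q.prob_compl[OF PB]) (simp add: pB)
qed

lemma gauss_interval_lb:
  fixes L U \<delta> :: real
  assumes "0 \<le> L" "0 < \<delta>" "L + \<delta> \<le> U"
  shows "\<delta> * std_normal_density (L + \<delta>) \<le> measure std_gauss {L..U}"
proof -
  interpret G: prob_space std_gauss by (rule prob_space_std_gauss)
  have mono: "std_normal_density (L + \<delta>) \<le> std_normal_density t" if "t \<in> {L..L+\<delta>}" for t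
  proof -
    have "t\<^sup>2 \<le> (L + \<delta>)\<^sup>2" using that assms by (intro power_mono) auto
    then show ?thesis unfolding std_normal_density_def by (intro mult_left_mono) auto
  qed
  have "emeasure std_gauss {L..L+\<delta>} = (\<integral>\<^sup>+t. ennreal (std_normal_density t) * indicator {L..L+\<delta>} t \<partial>lborel)"
    unfolding std_gauss_def by (subst emeasure_density) auto
  also have "\<dots> \<ge> (\<integral>\<^sup>+t. ennreal (std_normal_density (L + \<delta>)) * indicator {L..L+\<delta>} t \<partial>lborel)"
    by (intro nn_integral_mono) (auto simp: indicator_def mono)
  ultimately have "ennreal (std_normal_density (L + \<delta>)) * ennreal \<delta> \<le> emeasure std_gauss {L..L+\<delta>}"
    using assms by (simp add: nn_integral_cmult_indicator)
  moreover have "ennreal (\<delta> * std_normal_density (L + \<delta>)) = ennreal \<delta> * ennreal (std_normal_density (L + \<delta>))"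
    by (rule ennreal_mult) (use assms in auto)
  ultimately have "ennreal (\<delta> * std_normal_density (L + \<delta>)) \<le> ennreal (measure std_gauss {L..L+\<delta>})"
    by (simp add: G.emeasure_eq_measure mult.commute)
  then have "\<delta> * std_normal_density (L + \<delta>) \<le> measure std_gauss {L..L+\<delta>}"
    by (subst (asm) ennreal_le_iff) auto
  also have "\<dots> \<le> measure std_gauss {L..U}"
    using assms by (intro G.finite_measure_mono) auto
  finally show ?thesis .
qed

lemma key_ineq:
  fixes l :: real
  assumes l: "l > 0" and q: "(3/2 * ln l - 1)\<^sup>2 \<le> 2 * l"
  shows "l / 24 \<le> exp l * (1 / sqrt (2 * l)) * std_normal_density (sqrt (2 * l) - 3/2 * ln l / sqrt (2 * l) + 1 / sqrt (2 * l))"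
proof -
  define s where "s = sqrt (2 * l)"
  define q where "q = 3/2 * ln l - 1"
  have s: "s > 0" "s\<^sup>2 = 2 * l" using l by (auto simp: s_def)
  have Y: "s - 3/2 * ln l / s + 1 / s = s - q / s" unfolding q_def using s by (simp add: field_simps)
  have Y2: "(s - q / s)\<^sup>2 / 2 = l - q + q\<^sup>2 / (4 * l)"
    using s l by (simp add: power2_eq_square field_simps)
  have "exp l * (1 / s) * std_normal_density (s - q / s) = exp (l - (s - q / s)\<^sup>2 / 2) / (s * sqrt (2 * pi))"
  proof -
    have ee: "exp (l - (s - q / s)\<^sup>2 / 2) = exp l * exp (- ((s - q / s)\<^sup>2 / 2))"
      by (subst exp_add[symmetric]) simp
    show ?thesis unfolding std_normal_density_def ee by simp
  qed
  also have "l - (s - q / s)\<^sup>2 / 2 = q - q\<^sup>2 / (4 * l)" using Y2 l by (simp add: field_simps)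
  also have "exp (q - q\<^sup>2 / (4 * l)) = exp q * exp (- (q\<^sup>2 / (4 * l)))" by (simp add: exp_diff exp_minus field_simps)
  finally have E: "exp l * (1 / s) * std_normal_density (s - q / s) = exp q * exp (- (q\<^sup>2 / (4 * l))) / (s * sqrt (2 * pi))" .
  have h: "exp (- (q\<^sup>2 / (4 * l))) \<ge> 1/2"
  proof -
    have "q\<^sup>2 / (4 * l) \<le> 1/2" using q l unfolding q_def by (simp add: field_simps)
    moreover have "1 + (- (q\<^sup>2 / (4 * l))) \<le> exp (- (q\<^sup>2 / (4 * l)))" by (rule exp_ge_add_one_self)
    ultimately show ?thesis by linarith
  qed
  have eq: "exp q = exp (-1) * (l * sqrt l)"
  proof -
    have "exp q = exp (-1) * exp (3/2 * ln l)" unfolding q_def by (simp add: exp_add[symmetric])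
    also have "exp (3/2 * ln l) = l powr (3/2)" using l by (simp add: powr_def)
    also have "l powr (3/2) = l * sqrt l"
    proof -
      have "l powr (3/2) = l powr (1 + 1/2)" by simp
      also have "\<dots> = l powr 1 * l powr (1/2)" by (rule powr_add)
      also have "\<dots> = l * sqrt l" using l by (simp add: powr_half_sqrt)
      finally show ?thesis .
    qed
    finally show ?thesis .
  qed
  have sq: "s * sqrt (2 * pi) = 2 * sqrt l * sqrt pi"
    unfolding s_def by (simp add: real_sqrt_mult)
  have e1: "exp (-1::real) \<ge> 1/3"
  proof -
    have "exp (1::real) \<le> 3" using exp_le by simp
    then show ?thesis by (simp add: exp_minus field_simps)
  qed
  have pi4: "sqrt pi \<le> 2"
  proof -
    have "sqrt pi \<le> sqrt 4" using pi_less_4 by (intro real_sqrt_le_mono) simp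
    then show ?thesis by simp
  qed
  have sl: "sqrt l > 0" using l by simp
  have "l / 24 \<le> (1/3) * (l * sqrt l) * (1/2) / (2 * sqrt l * 2)"
    using sl l by (simp add: field_simps)
  also have "\<dots> \<le> exp (-1) * (l * sqrt l) * exp (- (q\<^sup>2 / (4 * l))) / (2 * sqrt l * sqrt pi)"
    using sl l e1 h pi4 by (intro frac_le mult_mono mult_pos_pos) auto
  also have "\<dots> = exp l * (1 / s) * std_normal_density (s - q / s)"
    using E eq sq by simp
  finally have X: "l / 24 \<le> exp l * (1 / s) * std_normal_density (s - q / s)" .
  show ?thesis unfolding s_def[symmetric] Y using X .
qed

lemma asymp3: "eventually (\<lambda>l::real. (3/2 * ln l - 1)\<^sup>2 \<le> 2 * l) at_top"
  by real_asymp

lemma asymp2: "eventually (\<lambda>l::real. 0 \<le> sqrt (2 * l) - 3 / 2 * ln l / sqrt (2 * l)) at_top"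
  by real_asymp

lemma asymp4: "eventually (\<lambda>l::real. 1 \<le> 3/2 * ln l) at_top"
  by real_asymp

theorem lemma3:
  shows "\<exists>c>0. \<exists>M::nat. \<forall>m\<ge>M. \<forall>d::nat. \<forall>x::nat \<Rightarrow> real.
           (\<Sum>j<d. (x j)\<^sup>2) = 1 \<longrightarrow>
           measure (closetop_gaussians m d)
             {a \<in> space (closetop_gaussians m d). closetop_stored m d x a}
           \<ge> 1 - 1 / (real m) powr c"
proof -
  define P where "P = (\<lambda>l::real. ((3/2 * ln l - 1)\<^sup>2 \<le> 2 * l \<and> 0 \<le> sqrt (2 * l) - 3 / 2 * ln l / sqrt (2 * l))
     \<and> (1 \<le> 3/2 * ln l \<and> 0 < l))"
  have evP: "eventually P at_top"
    unfolding P_def by (intro eventually_conj asymp2 asymp3 asymp4 eventually_gt_at_top)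
  have lim: "filterlim (\<lambda>m::nat. ln (real m)) at_top sequentially"
    by (rule filterlim_compose[OF ln_at_top filterlim_real_sequentially])
  have "eventually (\<lambda>m::nat. P (ln (real m))) sequentially"
    using lim evP by (simp add: filterlim_iff)
  then obtain M where M: "\<And>m. m \<ge> M \<Longrightarrow> P (ln (real m))"
    by (auto simp: eventually_sequentially)
  have "measure (closetop_gaussians m d) {a \<in> space (closetop_gaussians m d). closetop_stored m d x a}
           \<ge> 1 - 1 / (real m) powr (1/24)"
    if m: "m \<ge> M" and x: "(\<Sum>j<d. (x j)\<^sup>2) = 1" for m d x
  proof -
    define l where "l = ln (real m)"
    define s where "s = sqrt (2 * l)"
    define p where "p = measure std_gauss {closetop_lower m..closetop_upper m}"
    have Pl: "P l" using M[OF m] unfolding l_def .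
    have l0: "0 < l" and q: "(3/2 * ln l - 1)\<^sup>2 \<le> 2 * l" and L0: "0 \<le> s - 3 / 2 * ln l / s"
      and q1: "1 \<le> 3/2 * ln l"
      using Pl unfolding P_def s_def by auto
    have m0: "real m > 0" using l0 unfolding l_def by (cases "m = 0") auto
    have expl: "exp l = real m" unfolding l_def using m0 by simp
    have s0: "s > 0" using l0 unfolding s_def by simp
    have Lr: "closetop_lower m = s - 3 / 2 * ln l / s" unfolding closetop_lower_def s_def l_def ..
    have Ur: "closetop_upper m = s" unfolding closetop_upper_def s_def l_def ..
    have LU: "s - 3 / 2 * ln l / s + 1 / s \<le> s"
    proof -
      have "1 / s \<le> 3 / 2 * ln l / s" using q1 s0 by (intro divide_right_mono) auto
      then show ?thesis by simp
    qed
    have lb: "1 / s * std_normal_density (s - 3 / 2 * ln l / s + 1 / s) \<le> p"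
      unfolding p_def Lr Ur using L0 s0 LU by (intro gauss_interval_lb) auto
    have "l / 24 \<le> exp l * (1 / s) * std_normal_density (s - 3 / 2 * ln l / s + 1 / s)"
      unfolding s_def by (rule key_ineq[OF l0 q])
    also have "\<dots> = real m * (1 / s * std_normal_density (s - 3 / 2 * ln l / s + 1 / s))"
      unfolding expl by (simp only: mult.assoc)
    also have "\<dots> \<le> real m * p" using lb m0 by (intro mult_left_mono) auto
    finally have mp: "l / 24 \<le> real m * p" .
    interpret G: prob_space std_gauss by (rule prob_space_std_gauss)
    have p01: "0 \<le> p" "p \<le> 1" unfolding p_def by auto
    have "(1 - p) ^ m \<le> exp (- p) ^ m"
      using p01 by (intro power_mono) (auto simp: exp_ge_add_one_self[of "-p", simplified])
    also have "\<dots> = exp (- (real m * p))" by (simp add: exp_of_nat_mult[symmetric])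
    also have "\<dots> \<le> exp (- (l / 24))" using mp by simp
    also have "\<dots> = 1 / real m powr (1/24)"
      using m0 by (simp add: powr_def exp_minus l_def field_simps)
    finally have "(1 - p) ^ m \<le> 1 / real m powr (1/24)" .
    then show ?thesis using stored_prob[OF x, of m] unfolding p_def by simp
  qed
  then show ?thesis by (intro exI[of _ "1/24"]) auto
qed

end
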